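(* Let $\mathcal{C}$ be the MILP consisting of constraints (C1)–(C6) below for a binary tree ensemble $\mathcal{E}$, a set $F\subseteq\mathcal{F}$ of sensitive features and a gap $g$. Then the set of feasible solutions of $\mathcal{C}$ equals the set of feasible solutions of the MILP obtained by adding to $\mathcal{C}$ the constraints (UnAff) $l^{(1)}_n = l^{(2)}_n$ for every unaffected leaf $n\in\mathcal{U}$, and (Aff-bin) $\sum_{n\in\mathcal{A}\setminus\mathcal{U}}\left(l^{(1)}_n\, n.val - l^{(2)}_n\, n.val\right)\ge 2\delta$.
   Context: A decision tree is either a leaf $n$ with real value $n.val$ or an internal node with guard $X_f<\tau$ (feature $f$, constant $\tau$) and children $n.yes$ (taken when $x_f<\tau$) and $n.no$. A binary tree ensemble $\mathcal{E}$ is a finite set of such trees over feature set $\mathcal{F}$. For each feature $f$, let $\tau_{f1}<\tau_{f2}<\dots<\tau_{fK_f}$ be the distinct thresholds of guards on $f$ in the ensemble. Let $\mathcal{A}$ be the set of all leaves of all trees. For each internal node $n$, $TSet(n)$ is the set of leaves of the subtree rooted at $n.yes$ and $FSet(n)$ those of the subtree rooted at $n.no$. Let $g$ with $0\le g<0.5$ and $\delta=\mathrm{Sigmoid}^{-1}(0.5+g)$, where $\mathrm{Sigmoid}(z)=1/(1+e^{-z})$. Variables: for each copy $c\in\{1,2\}$, binary variables $p^{(c)}_{fk}\in\{0,1\}$ for every feature $f$ and $k\in\{1,\dots,K_f\}$ (intended meaning: $X_f<\tau_{fk}$), and continuous variables $0\le l^{(c)}_n\le 1$ for every leaf $n\in\mathcal{A}$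 (intended meaning: leaf $n$ is reached). Constraints of $\mathcal{C}$ (for each $c\in\{1,2\}$ where applicable): (C1) $p^{(c)}_{f1}\le p^{(c)}_{f2}\le\dots\le p^{(c)}_{fK_f}$ for each feature $f$; (C2) for each tree, the sum of $l^{(c)}_n$ over its leaves equals $1$; (C3) for each root node with guard $X_f<\tau_{fk}$: $1-\sum_{n\in FSet}l^{(c)}_n = p^{(c)}_{fk}=\sum_{n\in TSet}l^{(c)}_n$; (C4) for each non-root internal node with guard $X_f<\tau_{fk}$: $1-\sum_{n\in FSet}l^{(c)}_n \ge p^{(c)}_{fk}\ge\sum_{n\in TSet}l^{(c)}_n$; (C5) $p^{(1)}_{fk}=p^{(2)}_{fk}$ for every feature $f\notin F$ and every $k$; (C6) $\sum_{n\in\mathcal{A}}l^{(1)}_n\, n.val\ge\delta$ and $\sum_{n\in\mathcal{A}}l^{(2)}_n\, n.val\le-\delta$. A leaf is unaffected if no guard on the path from its tree's root to it involves a feature of $F$; $\mathcal{U}$ denotes the set of unaffected leaves. *)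

theory Defs
  imports Complex_Main
begin

text \<open>Decision trees: a leaf with a real value, or an internal node with guard
  X_f < tau (feature f, threshold tau), yes-child and no-child.\<close>
datatype dtree = Leaf real | Node nat real dtree dtree

text \<open>Nodes are identified by their path from the root (True = yes-branch).\<close>
fun leaves :: "dtree \<Rightarrow> bool list set" where
  "leaves (Leaf v) = {[]}"
| "leaves (Node f t y n) = (Cons True) ` leaves y \<union> (Cons False) ` leaves n"

fun guards :: "dtree \<Rightarrow> (bool list \<times> nat \<times> real) set" where
  "guards (Leaf v) = {}"
| "guards (Node f t y n) = {([], f, t)}
     \<union> (\<lambda>(q, g). (True # q, g)) ` guards y
     \<union> (\<lambda>(q, g). (False # q, g)) ` guards n"

fun leafval :: "dtree \<Rightarrow> bool list \<Rightarrow> real" where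
  "leafval (Leaf v) [] = v"
| "leafval (Node f t y n) (b # r) = (if b then leafval y r else leafval n r)"
| "leafval _ _ = 0"

definition TSet :: "dtree \<Rightarrow> bool list \<Rightarrow> bool list set" where
  "TSet t q = {r \<in> leaves t. \<exists>r'. r = q @ True # r'}"

definition FSet :: "dtree \<Rightarrow> bool list \<Rightarrow> bool list set" where
  "FSet t q = {r \<in> leaves t. \<exists>r'. r = q @ False # r'}"

text \<open>An ensemble is a finite family of trees, given as a list; a leaf of the ensemble
  is identified by (tree index, path).\<close>
definition allLeaves :: "dtree list \<Rightarrow> (nat \<times> bool list) set" where
  "allLeaves E = {(i, r). i < length E \<and> r \<in> leaves (E ! i)}"

definition thr :: "dtree list \<Rightarrow> nat \<Rightarrow> real set" where
  "thr E f = {\<tau>. \<exists>i < length E. \<exists>q. (q, f, \<tau>) \<in> guards (E ! i)}"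

definition val :: "dtree list \<Rightarrow> nat \<times> bool list \<Rightarrow> real" where
  "val E n = leafval (E ! fst n) (snd n)"

definition sigmoid :: "real \<Rightarrow> real" where
  "sigmoid z = 1 / (1 + exp (- z))"

definition delta :: "real \<Rightarrow> real" where
  "delta g = (THE z. sigmoid z = 1/2 + g)"

text \<open>Constraints (C1)-(C4) for one copy: p f tau is the variable p_{fk} with
  tau = tau_{fk}; l n is l_n for a leaf n.\<close>
definition copy_ok :: "dtree list \<Rightarrow> (nat \<Rightarrow> real \<Rightarrow> real) \<Rightarrow> (nat \<times> bool list \<Rightarrow> real) \<Rightarrow> bool" where
  "copy_ok E p l \<longleftrightarrow>
     (\<forall>f. \<forall>\<tau>\<in>thr E f. p f \<tau> \<in> {0, 1}) \<and>
     (\<forall>n\<in>allLeaves E. 0 \<le> l n \<and> l n \<le> 1) \<and>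
     (\<forall>f. \<forall>\<tau>\<in>thr E f. \<forall>\<tau>'\<in>thr E f. \<tau> \<le> \<tau>' \<longrightarrow> p f \<tau> \<le> p f \<tau>') \<and>
     (\<forall>i < length E. (\<Sum>r\<in>leaves (E ! i). l (i, r)) = 1) \<and>
     (\<forall>i < length E. \<forall>q f \<tau>. (q, f, \<tau>) \<in> guards (E ! i) \<longrightarrow>
        (if q = []
         then 1 - (\<Sum>r\<in>FSet (E ! i) q. l (i, r)) = p f \<tau> \<and> p f \<tau> = (\<Sum>r\<in>TSet (E ! i) q. l (i, r))
         else 1 - (\<Sum>r\<in>FSet (E ! i) q. l (i, r)) \<ge> p f \<tau> \<and> p f \<tau> \<ge> (\<Sum>r\<in>TSet (E ! i) q. l (i, r))))"

text \<open>The MILP C: (C1)-(C4) for both copies, (C5), (C6).\<close>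
definition milpC :: "dtree list \<Rightarrow> nat set \<Rightarrow> real \<Rightarrow>
    (nat \<Rightarrow> real \<Rightarrow> real) \<Rightarrow> (nat \<Rightarrow> real \<Rightarrow> real) \<Rightarrow>
    (nat \<times> bool list \<Rightarrow> real) \<Rightarrow> (nat \<times> bool list \<Rightarrow> real) \<Rightarrow> bool" where
  "milpC E F g p1 p2 l1 l2 \<longleftrightarrow>
     copy_ok E p1 l1 \<and> copy_ok E p2 l2 \<and>
     (\<forall>f. f \<notin> F \<longrightarrow> (\<forall>\<tau>\<in>thr E f. p1 f \<tau> = p2 f \<tau>)) \<and>
     (\<Sum>n\<in>allLeaves E. l1 n * val E n) \<ge> delta g \<and>
     (\<Sum>n\<in>allLeaves E. l2 n * val E n) \<le> - delta g"

definition unaffected :: "dtree list \<Rightarrow> nat set \<Rightarrow> nat \<times> bool list \<Rightarrow> bool" where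
  "unaffected E F n \<longleftrightarrow>
     (\<forall>q f \<tau>. (q, f, \<tau>) \<in> guards (E ! fst n) \<and> (\<exists>b r'. snd n = q @ b # r') \<longrightarrow> f \<notin> F)"

definition unaffLeaves :: "dtree list \<Rightarrow> nat set \<Rightarrow> (nat \<times> bool list) set" where
  "unaffLeaves E F = {n \<in> allLeaves E. unaffected E F n}"

end

theory Submission
  imports Defs
begin

lemma fin_leaves: "finite (leaves t)"
  by (induction t) auto

lemma leaves_diverge:
  "r \<in> leaves t \<Longrightarrow> r2 \<in> leaves t \<Longrightarrow> r \<noteq> r2 \<Longrightarrow>
   \<exists>q b s s2 f \<tau>. (q, f, \<tau>) \<in> guards t \<and> r = q @ b # s \<and> r2 = q @ (\<not> b) # s2"
proof (induction t arbitrary: r r2)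
  case (Leaf v)
  then show ?case by simp
next
  case (Node f \<tau> y n)
  show ?case
  proof (cases "hd r = hd r2")
    case True
    show ?thesis
    proof (cases "hd r")
      case True
      then obtain a a2 where a: "r = True # a" "r2 = True # a2" "a \<in> leaves y" "a2 \<in> leaves y"
        using Node.prems \<open>hd r = hd r2\<close> by auto
      then have "a \<noteq> a2" using Node.prems by auto
      then obtain q b s s2 f' \<tau>' where "(q, f', \<tau>') \<in> guards y" "a = q @ b # s" "a2 = q @ (\<not> b) # s2"
        using Node.IH(1) a by blast
      then show ?thesis using a
        by (intro exI[of _ "True # q"] exI[of _ b] exI[of _ s] exI[of _ s2] exI[of _ f'] exI[of _ \<tau>']) force
    next
      case False
      then obtain a a2 where a: "r = False # a" "r2 = False # a2" "a \<in> leaves n" "a2 \<in> leaves n"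
        using Node.prems \<open>hd r = hd r2\<close> by auto
      then have "a \<noteq> a2" using Node.prems by auto
      then obtain q b s s2 f' \<tau>' where "(q, f', \<tau>') \<in> guards n" "a = q @ b # s" "a2 = q @ (\<not> b) # s2"
        using Node.IH(2) a by blast
      then show ?thesis using a
        by (intro exI[of _ "False # q"] exI[of _ b] exI[of _ s] exI[of _ s2] exI[of _ f'] exI[of _ \<tau>']) force
    qed
  next
    case False
    obtain b s where r: "r = b # s" using Node.prems by auto
    obtain s2 where r2: "r2 = (\<not> b) # s2" using Node.prems False r by auto
    show ?thesis using r r2
      by (intro exI[of _ "[]"] exI[of _ b] exI[of _ s] exI[of _ s2] exI[of _ f] exI[of _ \<tau>]) simp
  qed
qed

definition agree :: "(nat \<Rightarrow> real \<Rightarrow> real) \<Rightarrow> dtree \<Rightarrow> bool list \<Rightarrow> bool" where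
  "agree P t r \<longleftrightarrow> (\<forall>q f \<tau> b s. (q, f, \<tau>) \<in> guards t \<and> r = q @ b # s \<longrightarrow> (b \<longleftrightarrow> P f \<tau> = 1))"

lemma leaf_ind:
  assumes nn: "\<forall>r\<in>leaves t. 0 \<le> L r" and s1: "(\<Sum>r\<in>leaves t. L r) = 1"
    and G: "\<forall>q f \<tau>. (q, f, \<tau>) \<in> guards t \<longrightarrow> (P f \<tau> = 1 \<longrightarrow> (\<forall>r\<in>FSet t q. L r = 0))
             \<and> (P f \<tau> \<noteq> 1 \<longrightarrow> (\<forall>r\<in>TSet t q. L r = 0))"
    and r: "r \<in> leaves t"
  shows "L r = (if agree P t r then 1 else 0)"
proof (cases "agree P t r")
  case False
  then obtain q f \<tau> b s where g: "(q, f, \<tau>) \<in> guards t" "r = q @ b # s" "b \<noteq> (P f \<tau> = 1)"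
    unfolding agree_def by blast
  show ?thesis
  proof (cases b)
    case True
    then have "r \<in> TSet t q" using g r unfolding TSet_def by auto
    then show ?thesis using G g True False by auto
  next
    case b: False
    then have "r \<in> FSet t q" using g r unfolding FSet_def by auto
    then show ?thesis using G g b False by auto
  qed
next
  case True
  have z: "L r2 = 0" if "r2 \<in> leaves t - {r}" for r2
  proof -
    have r2: "r2 \<in> leaves t" "r \<noteq> r2" using that by auto
    obtain q b s s2 f \<tau> where g: "(q, f, \<tau>) \<in> guards t" "r = q @ b # s" "r2 = q @ (\<not> b) # s2"
      using leaves_diverge[OF r r2] by blast
    have "b \<longleftrightarrow> P f \<tau> = 1" using True g unfolding agree_def by blast
    show ?thesis
    proof (cases b)
      case True
      then have "r2 \<in> FSet t q" using g that unfolding FSet_def by auto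
      then show ?thesis using G g True \<open>b \<longleftrightarrow> P f \<tau> = 1\<close> by auto
    next
      case False
      then have "r2 \<in> TSet t q" using g that unfolding TSet_def by auto
      then show ?thesis using G g False \<open>b \<longleftrightarrow> P f \<tau> = 1\<close> by auto
    qed
  qed
  have "(\<Sum>r\<in>leaves t. L r) = L r + (\<Sum>r2\<in>leaves t - {r}. L r2)"
    using sum.remove[OF fin_leaves r] by simp
  also have "(\<Sum>r2\<in>leaves t - {r}. L r2) = 0" using z by simp
  finally show ?thesis using s1 True by simp
qed

lemma copy_ind:
  assumes ok: "copy_ok E p l" and i: "i < length E" and r: "r \<in> leaves (E ! i)"
  shows "l (i, r) = (if agree p (E ! i) r then 1 else 0)"
proof (rule leaf_ind[where L="\<lambda>r. l (i, r)" and P=p, OF _ _ _ r])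
  have nn: "\<forall>r\<in>leaves (E ! i). 0 \<le> l (i, r)"
  proof
    fix r assume "r \<in> leaves (E ! i)"
    then have "(i, r) \<in> allLeaves E" using i unfolding allLeaves_def by simp
    then show "0 \<le> l (i, r)"
      using ok[unfolded copy_ok_def, THEN conjunct2, THEN conjunct1] by blast
  qed
  then show "\<forall>r\<in>leaves (E ! i). 0 \<le> l (i, r)" .
  show "(\<Sum>r\<in>leaves (E ! i). l (i, r)) = 1" using ok[unfolded copy_ok_def, THEN conjunct2, THEN conjunct2, THEN conjunct2, THEN conjunct1, rule_format, OF i] .
  show "\<forall>q f \<tau>. (q, f, \<tau>) \<in> guards (E ! i) \<longrightarrow> (p f \<tau> = 1 \<longrightarrow> (\<forall>r\<in>FSet (E ! i) q. l (i, r) = 0))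
             \<and> (p f \<tau> \<noteq> 1 \<longrightarrow> (\<forall>r\<in>TSet (E ! i) q. l (i, r) = 0))"
  proof (intro allI impI conjI)
    fix q f \<tau> assume g: "(q, f, \<tau>) \<in> guards (E ! i)"
    have th: "\<tau> \<in> thr E f" using g i unfolding thr_def by blast
    have p01: "p f \<tau> \<in> {0, 1}" using ok[unfolded copy_ok_def, THEN conjunct1, rule_format, OF th] .
    have ineq: "1 - (\<Sum>r\<in>FSet (E ! i) q. l (i, r)) \<ge> p f \<tau> \<and> p f \<tau> \<ge> (\<Sum>r\<in>TSet (E ! i) q. l (i, r))"
    proof -
      have "if q = []
         then 1 - (\<Sum>r\<in>FSet (E ! i) q. l (i, r)) = p f \<tau> \<and> p f \<tau> = (\<Sum>r\<in>TSet (E ! i) q. l (i, r))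
         else 1 - (\<Sum>r\<in>FSet (E ! i) q. l (i, r)) \<ge> p f \<tau> \<and> p f \<tau> \<ge> (\<Sum>r\<in>TSet (E ! i) q. l (i, r))"
        using ok[unfolded copy_ok_def, THEN conjunct2, THEN conjunct2, THEN conjunct2, THEN conjunct2, rule_format, OF i g] .
      note ifact = this
      show ?thesis
      proof (cases "q = []")
        case True
        show ?thesis using ifact[unfolded if_P[OF True]] by linarith
      next
        case False
        show ?thesis using ifact[unfolded if_not_P[OF False]] by linarith
      qed
    qed
    have finF: "finite (FSet (E ! i) q)" unfolding FSet_def using fin_leaves by simp
    have finT: "finite (TSet (E ! i) q)" unfolding TSet_def using fin_leaves by simp
    have nnF: "\<forall>r\<in>FSet (E ! i) q. 0 \<le> l (i, r)" using nn unfolding FSet_def by auto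
    have nnT: "\<forall>r\<in>TSet (E ! i) q. 0 \<le> l (i, r)" using nn unfolding TSet_def by auto
    have sF: "(\<Sum>r\<in>FSet (E ! i) q. l (i, r)) \<ge> 0" by (rule sum_nonneg) (use nnF in blast)
    have sT: "(\<Sum>r\<in>TSet (E ! i) q. l (i, r)) \<ge> 0" by (rule sum_nonneg) (use nnT in blast)
    {
      assume "p f \<tau> = 1"
      then have "(\<Sum>r\<in>FSet (E ! i) q. l (i, r)) = 0" using ineq sF by linarith
      then show "\<forall>r\<in>FSet (E ! i) q. l (i, r) = 0" using sum_nonneg_eq_0_iff[OF finF, of "\<lambda>r. l (i, r)"] nnF by simp
    }
    {
      assume "p f \<tau> \<noteq> 1"
      then have "p f \<tau> = 0" using p01 by auto
      then have "(\<Sum>r\<in>TSet (E ! i) q. l (i, r)) = 0" using ineq sT by linarith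
      then show "\<forall>r\<in>TSet (E ! i) q. l (i, r) = 0" using sum_nonneg_eq_0_iff[OF finT, of "\<lambda>r. l (i, r)"] nnT by simp
    }
  qed
qed

lemma fin_all: "finite (allLeaves E)"
proof -
  have "allLeaves E = (\<Union>i<length E. Pair i ` leaves (E ! i))"
    unfolding allLeaves_def by auto
  then show ?thesis using fin_leaves by simp
qed

lemma unaff_eq:
  assumes C: "milpC E F g p1 p2 l1 l2" and n: "n \<in> unaffLeaves E F"
  shows "l1 n = l2 n"
proof -
  obtain i r where n': "n = (i, r)" by (cases n)
  have i: "i < length E" and r: "r \<in> leaves (E ! i)" and u: "unaffected E F n"
    using n n' unfolding unaffLeaves_def allLeaves_def by auto
  have ok1: "copy_ok E p1 l1" and ok2: "copy_ok E p2 l2" and c5: "\<forall>f. f \<notin> F \<longrightarrow> (\<forall>\<tau>\<in>thr E f. p1 f \<tau> = p2 f \<tau>)"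
    using C unfolding milpC_def by auto
  have "agree p1 (E ! i) r = agree p2 (E ! i) r"
    unfolding agree_def
  proof (intro iff_allI)
    fix q f \<tau> b s
    show "((q, f, \<tau>) \<in> guards (E ! i) \<and> r = q @ b # s \<longrightarrow> (b \<longleftrightarrow> p1 f \<tau> = 1)) =
          ((q, f, \<tau>) \<in> guards (E ! i) \<and> r = q @ b # s \<longrightarrow> (b \<longleftrightarrow> p2 f \<tau> = 1))"
    proof (cases "(q, f, \<tau>) \<in> guards (E ! i) \<and> r = q @ b # s")
      case g: True
    have "f \<notin> F" using u g n' unfolding unaffected_def by auto
    moreover have "\<tau> \<in> thr E f" using g i unfolding thr_def by blast
    ultimately show ?thesis using c5 by auto
    next
      case False
      show ?thesis by (simp only: False simp_thms)
    qed
  qed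
  then show ?thesis using copy_ind[OF ok1 i r] copy_ind[OF ok2 i r] n' by simp
qed

theorem theorem3:
  fixes E :: "dtree list" and Feats F :: "nat set" and g :: real
  assumes "\<forall>i < length E. \<forall>q f \<tau>. (q, f, \<tau>) \<in> guards (E ! i) \<longrightarrow> f \<in> Feats"
    and "F \<subseteq> Feats"
    and "0 \<le> g" and "g < 1/2"
  shows "{(p1, p2, l1, l2). milpC E F g p1 p2 l1 l2}
       = {(p1, p2, l1, l2). milpC E F g p1 p2 l1 l2
            \<and> (\<forall>n\<in>unaffLeaves E F. l1 n = l2 n)
            \<and> (\<Sum>n\<in>allLeaves E - unaffLeaves E F. l1 n * val E n - l2 n * val E n) \<ge> 2 * delta g}"
proof -
  have key: "milpC E F g p1 p2 l1 l2 \<Longrightarrow> (\<forall>n\<in>unaffLeaves E F. l1 n = l2 n)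
            \<and> (\<Sum>n\<in>allLeaves E - unaffLeaves E F. l1 n * val E n - l2 n * val E n) \<ge> 2 * delta g"
    for p1 p2 l1 l2
  proof
    assume C: "milpC E F g p1 p2 l1 l2"
    show U: "\<forall>n\<in>unaffLeaves E F. l1 n = l2 n" using unaff_eq[OF C] by blast
    have sub: "unaffLeaves E F \<subseteq> allLeaves E" unfolding unaffLeaves_def by auto
    have "(\<Sum>n\<in>allLeaves E - unaffLeaves E F. l1 n * val E n - l2 n * val E n)
        = (\<Sum>n\<in>allLeaves E. l1 n * val E n - l2 n * val E n)"
      by (rule sum.mono_neutral_left) (use fin_all U in auto)
    also have "\<dots> = (\<Sum>n\<in>allLeaves E. l1 n * val E n) - (\<Sum>n\<in>allLeaves E. l2 n * val E n)"
      by (simp add: sum_subtractf)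
    also have "\<dots> \<ge> 2 * delta g" using C unfolding milpC_def by linarith
    finally show "(\<Sum>n\<in>allLeaves E - unaffLeaves E F. l1 n * val E n - l2 n * val E n) \<ge> 2 * delta g" .
  qed
  show ?thesis
  proof (rule set_eqI)
    fix x :: "(nat \<Rightarrow> real \<Rightarrow> real) \<times> (nat \<Rightarrow> real \<Rightarrow> real) \<times> (nat \<times> bool list \<Rightarrow> real) \<times> (nat \<times> bool list \<Rightarrow> real)"
    obtain p1 p2 l1 l2 where x: "x = (p1, p2, l1, l2)" by (cases x) auto
    show "x \<in> {(p1, p2, l1, l2). milpC E F g p1 p2 l1 l2} \<longleftrightarrow> x \<in> {(p1, p2, l1, l2). milpC E F g p1 p2 l1 l2
            \<and> (\<forall>n\<in>unaffLeaves E F. l1 n = l2 n)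
            \<and> (\<Sum>n\<in>allLeaves E - unaffLeaves E F. l1 n * val E n - l2 n * val E n) \<ge> 2 * delta g}"
      unfolding x using key[of p1 p2 l1 l2] by (simp only: mem_Collect_eq prod.case) blast
  qed
qed

end
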